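(* Let $q$ be a prime power, $n\ge1$, and $d,m$ positive integers. There exists an equidistant linear code $\mathcal{U}\subseteq\mathbb{P}_q(n)$ with constant distance $2d$ and $|\mathcal{U}|=2^m$ if and only if there exists a $d$-intersecting family $\mathcal{F}\subseteq\mathbb{G}_q(n,2d)$ with $|\mathcal{F}|=2^m-1$.
   Context: $\mathbb{P}_q(n)$ denotes the set of all subspaces of $\mathbb{F}_q^n$ and $\mathbb{G}_q(n,k)$ the set of $k$-dimensional subspaces. For subspaces $X,Y$ the subspace distance is $d_S(X,Y)=\dim X+\dim Y-2\dim(X\cap Y)$. A linear code in $\mathbb{P}_q(n)$ is a subset $\mathcal{U}\subseteq\mathbb{P}_q(n)$ with $\{0\}\in\mathcal{U}$ for which there exists a map $\boxplus:\mathcal{U}\times\mathcal{U}\to\mathcal{U}$ such that (i) $(\mathcal{U},\boxplus)$ is an abelian group; (ii) its identity element is $\{0\}$; (iii) $X\boxplus X=\{0\}$ for all $X\in\mathcal{U}$; (iv) $d_S(Y_1\boxplus X,Y_2\boxplus X)=d_S(Y_1,Y_2)$ for all $Y_1,Y_2,X\in\mathcal{U}$. It is equidistant with constant distance $r$ if $d_S(X,Y)=r$ for all distinct $X,Y\in\mathcal{U}$. A family $\mathcal{F}$ of subspaces is $\lambda$-intersecting if $\dim(X\cap Y)=\lambda$ for all distinct $X,Y\in\mathcal{F}$. *)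

theory Defs
  imports "HOL-Analysis.Cartesian_Space" "HOL-Algebra.Group"
begin

text \<open>The ambient space F_q^n is modelled as the type 'a ^ 'n, where 'a is a finite
field (hence of prime-power order q) and 'n a finite type with CARD('n) = n >= 1.\<close>

definition Psub :: "('a::field ^ 'n) set set" where
  "Psub = {X. vec.subspace X}"

definition Gsub :: "nat \<Rightarrow> ('a::field ^ 'n) set set" where
  "Gsub k = {X. vec.subspace X \<and> vec.dim X = k}"

definition dS :: "('a::field ^ 'n) set \<Rightarrow> ('a ^ 'n) set \<Rightarrow> nat" where
  "dS X Y = vec.dim X + vec.dim Y - 2 * vec.dim (X \<inter> Y)"

definition linear_code :: "('a::field ^ 'n) set set \<Rightarrow> bool" where
  "linear_code U \<longleftrightarrow> U \<subseteq> Psub \<and> {0} \<in> U \<and>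
     (\<exists>f. (\<forall>X\<in>U. \<forall>Y\<in>U. f X Y \<in> U) \<and>
          comm_group \<lparr>carrier = U, mult = f, one = {0}\<rparr> \<and>
          (\<forall>X\<in>U. f X X = {0}) \<and>
          (\<forall>Y1\<in>U. \<forall>Y2\<in>U. \<forall>X\<in>U. dS (f Y1 X) (f Y2 X) = dS Y1 Y2))"

definition equidistant :: "nat \<Rightarrow> ('a::field ^ 'n) set set \<Rightarrow> bool" where
  "equidistant r U \<longleftrightarrow> (\<forall>X\<in>U. \<forall>Y\<in>U. X \<noteq> Y \<longrightarrow> dS X Y = r)"

definition intersecting :: "nat \<Rightarrow> ('a::field ^ 'n) set set \<Rightarrow> bool" where
  "intersecting l F \<longleftrightarrow> (\<forall>X\<in>F. \<forall>Y\<in>F. X \<noteq> Y \<longrightarrow> vec.dim (X \<inter> Y) = l)"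

end

theory Submission
  imports Defs
begin

lemma dim_zero_set: "vec.dim ({0} :: ('a::field ^ 'n) set) = 0"
  by (metis vec.dim_span vec.dim_empty vec.span_empty)

lemma dS_zero: "vec.subspace X \<Longrightarrow> dS X {0} = vec.dim X" "vec.subspace X \<Longrightarrow> dS {0} X = vec.dim X"
proof -
  assume "vec.subspace X"
  then have "0 \<in> X" by (rule vec.subspace_0)
  then have "X \<inter> {0} = {0}" "{0} \<inter> X = {0}" by auto
  then show "dS X {0} = vec.dim X" "dS {0} X = vec.dim X"
    by (simp_all add: dS_def dim_zero_set)
qed

lemma dS_self: "dS X X = 0"
  by (simp add: dS_def)

theorem theorem10:
  fixes d m :: nat
  assumes "d > 0" and "m > 0"
  shows "(\<exists>U :: ('a::{field,finite} ^ 'n) set set.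
            linear_code U \<and> equidistant (2 * d) U \<and> card U = 2 ^ m)
     \<longleftrightarrow> (\<exists>F :: ('a ^ 'n) set set.
            F \<subseteq> Gsub (2 * d) \<and> intersecting d F \<and> card F = 2 ^ m - 1)"
proof
  assume "\<exists>U :: ('a ^ 'n) set set. linear_code U \<and> equidistant (2 * d) U \<and> card U = 2 ^ m"
  then obtain U :: "('a ^ 'n) set set" where lc: "linear_code U" and eq: "equidistant (2 * d) U"
    and cU: "card U = 2 ^ m" by blast
  have sub: "U \<subseteq> Psub" and z: "{0} \<in> U" using lc by (auto simp: linear_code_def)
  have fin: "finite U" by simp
  define F where "F = U - {{0}}"
  have dimF: "vec.dim X = 2 * d" "vec.subspace X" if "X \<in> F" for X
  proof -
    have "X \<in> U" "X \<noteq> {0}" using that by (auto simp: F_def)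
    moreover have "vec.subspace X" using sub \<open>X \<in> U\<close> by (auto simp: Psub_def)
    ultimately show "vec.dim X = 2 * d" "vec.subspace X"
      using eq z dS_zero[of X] by (auto simp: equidistant_def)
  qed
  have "F \<subseteq> Gsub (2 * d)" using dimF by (auto simp: Gsub_def)
  moreover have "intersecting d F"
    unfolding intersecting_def
  proof (intro ballI impI)
    fix X Y assume X: "X \<in> F" and Y: "Y \<in> F" and ne: "X \<noteq> Y"
    have "dS X Y = 2 * d" using X Y ne eq by (auto simp: F_def equidistant_def)
    moreover have "vec.dim (X \<inter> Y) \<le> vec.dim X" by (rule vec.dim_subset) auto
    ultimately show "vec.dim (X \<inter> Y) = d" using dimF[OF X] dimF[OF Y] by (simp add: dS_def)
  qed
  moreover have "card F = 2 ^ m - 1" using cU z fin by (simp add: F_def)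
  ultimately show "\<exists>F :: ('a ^ 'n) set set. F \<subseteq> Gsub (2 * d) \<and> intersecting d F \<and> card F = 2 ^ m - 1"
    by blast
next
  assume "\<exists>F :: ('a ^ 'n) set set. F \<subseteq> Gsub (2 * d) \<and> intersecting d F \<and> card F = 2 ^ m - 1"
  then obtain F :: "('a ^ 'n) set set" where FG: "F \<subseteq> Gsub (2 * d)" and int: "intersecting d F"
    and cF: "card F = 2 ^ m - 1" by blast
  have finF: "finite F" by simp
  have z0: "{0} \<notin> F" using FG assms(1) dim_zero_set[where 'a='a and 'n='n] by (auto simp: Gsub_def)
  define U where "U = insert {0} F"
  define P where "P = Pow {..<m} - {{}}"
  have "card P = card F" using cF by (simp add: P_def card_Pow)
  then obtain g0 where g0: "bij_betw g0 F P"
    using finite_same_card_bij[of F P] finF by (auto simp: P_def)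
  define g where "g X = (if X = {0} then {} else g0 X)" for X
  have bg: "bij_betw g U (Pow {..<m})"
  proof -
    have "bij_betw g F P" using g0 z0 by (smt (verit) bij_betw_cong g_def)
    then have "bij_betw g (F \<union> {{0}}) (P \<union> {g {0}})"
      by (intro notIn_Un_bij_betw) (auto simp: g_def z0 P_def)
    then have "bij_betw g (insert {0} F) (insert {} P)" by (simp add: g_def)
    moreover have "insert {} P = Pow {..<m}" by (auto simp: P_def)
    ultimately show ?thesis by (simp add: U_def)
  qed
  define h where "h = inv_into U g"
  have gU: "g ` U = Pow {..<m}" using bg by (simp add: bij_betw_def)
  have injg: "inj_on g U" using bg by (simp add: bij_betw_def)
  have hU: "h A \<in> U" if "A \<in> Pow {..<m}" for A
    using that gU by (auto simp: h_def intro: inv_into_into)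
  have gh: "g (h A) = A" if "A \<in> Pow {..<m}" for A
    using that gU unfolding h_def by (metis f_inv_into_f)
  have hg: "h (g X) = X" if "X \<in> U" for X
    using that injg by (simp add: h_def inv_into_f_f)
  have gin: "g X \<in> Pow {..<m}" if "X \<in> U" for X using that gU by auto
  define f where "f X Y = h ((g X - g Y) \<union> (g Y - g X))" for X Y
  have fU: "f X Y \<in> U" if "X \<in> U" "Y \<in> U" for X Y
    unfolding f_def using gin[OF that(1)] gin[OF that(2)] by (intro hU) auto
  have gf: "g (f X Y) = (g X - g Y) \<union> (g Y - g X)" if "X \<in> U" "Y \<in> U" for X Y
    unfolding f_def using gin[OF that(1)] gin[OF that(2)] by (intro gh) auto
  have g0z: "g {0} = {}" by (simp add: g_def)
  have zU: "{0} \<in> U" by (simp add: U_def)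
  have Psub: "U \<subseteq> Psub" using FG by (auto simp: U_def Psub_def Gsub_def vec.subspace_single_0)
  have dist: "dS X Y = 2 * d" if xy: "X \<in> U" "Y \<in> U" "X \<noteq> Y" for X Y
  proof -
    consider "X = {0}" "Y \<in> F" | "Y = {0}" "X \<in> F" | "X \<in> F" "Y \<in> F"
      using xy by (auto simp: U_def)
    then show ?thesis
    proof cases
      case 1 then show ?thesis using FG dS_zero(2)[of Y] by (auto simp: Gsub_def)
    next
      case 2 then show ?thesis using FG dS_zero(1)[of X] by (auto simp: Gsub_def)
    next
      case 3
      then have "vec.dim (X \<inter> Y) = d" using int xy(3) by (auto simp: intersecting_def)
      moreover have "vec.dim X = 2 * d" "vec.dim Y = 2 * d" using 3 FG by (auto simp: Gsub_def)
      ultimately show ?thesis by (simp add: dS_def)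
    qed
  qed
  have "comm_group \<lparr>carrier = U, mult = f, one = {0}\<rparr>"
  proof (rule comm_groupI, simp_all)
    show "\<And>x y. x \<in> U \<Longrightarrow> y \<in> U \<Longrightarrow> f x y \<in> U" by (rule fU)
    show "{0} \<in> U" by (rule zU)
    show "f (f x y) z = f x (f y z)" if "x \<in> U" "y \<in> U" "z \<in> U" for x y z
    proof -
      have "g (f (f x y) z) = g (f x (f y z))"
        using that by (simp add: gf fU) blast
      then show ?thesis using injg fU that by (meson inj_onD)
    qed
    show "f x y = f y x" if "x \<in> U" "y \<in> U" for x y
      unfolding f_def by (simp add: Un_commute)
    show "f {0} x = x" if "x \<in> U" for x
      unfolding f_def using that by (simp add: g0z hg)
    show "\<exists>y\<in>U. f y x = {0}" if "x \<in> U" for x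
      using that by (intro bexI[of _ x]) (simp_all add: f_def g0z[symmetric] hg zU)
  qed
  moreover have "\<forall>X\<in>U. f X X = {0}" by (simp add: f_def g0z[symmetric] hg zU)
  moreover have "\<forall>Y1\<in>U. \<forall>Y2\<in>U. \<forall>X\<in>U. dS (f Y1 X) (f Y2 X) = dS Y1 Y2"
  proof (intro ballI)
    fix Y1 Y2 X assume a: "Y1 \<in> U" "Y2 \<in> U" "X \<in> U"
    show "dS (f Y1 X) (f Y2 X) = dS Y1 Y2"
    proof (cases "Y1 = Y2")
      case True then show ?thesis by (simp add: dS_self)
    next
      case False
      have "g Y1 \<noteq> g Y2" using False injg a by (meson inj_onD)
      then have "g (f Y1 X) \<noteq> g (f Y2 X)" using a by (simp add: gf) blast
      then have "f Y1 X \<noteq> f Y2 X" by metis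
      then show ?thesis using dist a False fU by simp
    qed
  qed
  ultimately have "linear_code U" using fU Psub zU unfolding linear_code_def by blast
  moreover have "equidistant (2 * d) U" using dist by (simp add: equidistant_def)
  moreover have "card U = 2 ^ m" using cF z0 finF by (simp add: U_def)
  ultimately show "\<exists>U :: ('a ^ 'n) set set. linear_code U \<and> equidistant (2 * d) U \<and> card U = 2 ^ m"
    by blast
qed

end
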